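(* Let $n \geq 2$, $x \in \mathbb{R}^{n+1}$ with $|x| < 1$, and $\alpha \geq -n$. Then the weighted manifold $(S^n, g, \mu_x^{n,\alpha})$ satisfies the Curvature-Dimension condition $CD\left(n-1-\frac{n+\alpha}{4}, -\alpha\right)$.
   Context: $S^n \subset \mathbb{R}^{n+1}$ is the unit sphere with its canonical Riemannian metric $g$ (induced from the Euclidean metric $|\cdot|$ on $\mathbb{R}^{n+1}$), and $\sigma^n$ is the rotation-invariant (Haar) probability measure on $S^n$. For $n\ge 2$, $|x|<1$ and $\alpha\in\mathbb{R}$, $\mu_x^{n,\alpha}$ is the probability measure on $S^n$ given by $d\mu_x^{n,\alpha}(y) = \frac{c_x^{n,\alpha}}{|y-x|^{n+\alpha}}\, d\sigma^n(y)$, where $c_x^{n,\alpha}>0$ is the normalizing constant. Curvature-Dimension condition (tensorial definition): Let $(M^n,g)$ be a closed connected Riemannian manifold and $\mu$ a measure on $M$ with positive $C^2$ density $\Psi$ with respect to the Riemannian volume measure (equivalently, any constant multiple of it, e.g. with respect to $\sigma^n$ on the sphere). For $N \in (-\infty,\infty]$ define $\mathrm{Ric}_{g,\mu,N} := \mathrm{Ric}_g - \nabla_g^2 \log \Psi - \frac{1}{N-n} \nabla_g \log\Psi \otimes \nabla_g \log \Psi$, with conventions $1/\infty = 0$, $1/0 = +\infty$, $\infty\cdot 0 = 0$. For $\rho\in\mathbb{R}$, $(M,g,\mu)$ satisfies $CD(\rho,N)$ if $\mathrm{Ric}_{g,\mu,N} \geq \rho\, g$ as symmetric 2-tensors everywhere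 on $M$. (This tensorial definition is used for all $N$, including $N\in[0,n)$.) *)

theory Defs
  imports "HOL-Analysis.Analysis"
begin

text \<open>Unit sphere S^n in R^(n+1), where R^(n+1) is modelled as real^'n with CARD('n) = n+1.\<close>

definition sdim :: "'n::finite itself \<Rightarrow> real" where
  "sdim _ = real CARD('n) - 1"

definition geod :: "real^'n \<Rightarrow> real^'n \<Rightarrow> real \<Rightarrow> real^'n" where
  "geod y v t = cos (t * norm v) *\<^sub>R y + sin (t * norm v) *\<^sub>R (v /\<^sub>R norm v)"

definition sph_diff :: "(real^'n \<Rightarrow> real) \<Rightarrow> real^'n \<Rightarrow> real^'n \<Rightarrow> real" where
  "sph_diff f y v = deriv (\<lambda>t. f (geod y v t)) 0"

definition sph_hess :: "(real^'n \<Rightarrow> real) \<Rightarrow> real^'n \<Rightarrow> real^'n \<Rightarrow> real" where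
  "sph_hess f y v = deriv (\<lambda>t. deriv (\<lambda>s. f (geod y v s)) t) 0"

definition sph_ric :: "'n::finite itself \<Rightarrow> real^'n \<Rightarrow> real" where
  "sph_ric T v = (sdim T - 1) * (norm v)\<^sup>2"

text \<open>The coefficient 1/(N-n) with conventions 1/infinity = 0 and 1/0 = +infinity.\<close>

definition cd_coef :: "'n::finite itself \<Rightarrow> ereal \<Rightarrow> ereal" where
  "cd_coef T N = (if N = \<infinity> \<or> N = -\<infinity> then 0
                  else if real_of_ereal N = sdim T then \<infinity>
                  else ereal (1 / (real_of_ereal N - sdim T)))"

text \<open>Weighted Ricci tensor Ric_{g,mu,N}(v,v) for the measure with density Psi (w.r.t. sigma^n);
  ereal multiplication has infinity * 0 = 0.\<close>

definition weighted_ric :: "ereal \<Rightarrow> (real^'n \<Rightarrow> real) \<Rightarrow> real^'n \<Rightarrow> real^'n \<Rightarrow> ereal" where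
  "weighted_ric N \<Psi> y v =
     ereal (sph_ric TYPE('n) v - sph_hess (\<lambda>z. ln (\<Psi> z)) y v)
     - cd_coef TYPE('n) N * ereal ((sph_diff (\<lambda>z. ln (\<Psi> z)) y v)\<^sup>2)"

text \<open>CD(rho,N) for (S^n, g, Psi sigma^n): Psi positive on S^n and Ric_{g,mu,N} >= rho g as
  quadratic forms on every tangent space T_y S^n = {v. v . y = 0}.\<close>

definition CD_sphere :: "real \<Rightarrow> ereal \<Rightarrow> (real^'n \<Rightarrow> real) \<Rightarrow> bool" where
  "CD_sphere \<rho> N \<Psi> \<longleftrightarrow>
     (\<forall>y\<in>sphere 0 1. \<Psi> y > 0) \<and>
     (\<forall>y\<in>sphere 0 1. \<forall>v. v \<bullet> y = 0 \<longrightarrow> weighted_ric N \<Psi> y v \<ge> ereal (\<rho> * (norm v)\<^sup>2))"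

end

theory Submission imports Defs begin
lemma geod_h:
  fixes x y v :: "real^'n"
  assumes y1: "norm y = 1" and vy: "v \<bullet> y = 0" and v0: "v \<noteq> 0" and x1: "norm x < 1"
  shows "norm (geod y v t - x) ^ 2 = 1 + (norm x)^2 - 2*((x \<bullet> y) * cos(t*norm v) + (x \<bullet> (v /\<^sub>R norm v)) * sin(t*norm v))"
    and "norm (geod y v t - x) > 0"
proof -
  define u where "u = v /\<^sub>R norm v"
  have uu: "u \<bullet> u = 1" using v0 unfolding u_def
    by (simp add: inner_commute power2_norm_eq_inner[symmetric])
  have uy: "u \<bullet> y = 0" "y \<bullet> u = 0" using vy unfolding u_def by (auto simp: inner_commute)
  have yy: "y \<bullet> y = 1" using y1 by (simp add: power2_norm_eq_inner[symmetric])
  have g: "geod y v t = cos (t*norm v) *\<^sub>R y + sin (t*norm v) *\<^sub>R u" unfolding geod_def u_def by simp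
  have gg: "geod y v t \<bullet> geod y v t = 1"
    unfolding g by (simp add: inner_add_left inner_add_right uu uy yy)
  show e: "norm (geod y v t - x) ^ 2 = 1 + (norm x)^2 - 2*((x \<bullet> y) * cos(t*norm v) + (x \<bullet> (v /\<^sub>R norm v)) * sin(t*norm v))"
    unfolding power2_norm_eq_inner inner_diff_left inner_diff_right gg
    unfolding g u_def[symmetric] by (simp add: inner_add_left inner_add_right inner_commute algebra_simps)
  have "norm (geod y v t) = 1" using gg by (simp add: norm_eq_sqrt_inner)
  then have "geod y v t \<noteq> x" using x1 by auto
  then show "norm (geod y v t - x) > 0" by simp
qed
lemma scal_derivs:
  fixes A a b w \<beta> L :: real
  defines "h \<equiv> \<lambda>t. A - 2*(a * cos(t * w) + b * sin(t * w))"
  assumes hpos: "\<And>t. h t > 0"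
  shows "deriv (\<lambda>t. L - \<beta> * ln (h t)) 0 = - \<beta> * (-2*w*b) / (A - 2*a)"
    and "deriv (\<lambda>t. deriv (\<lambda>t. L - \<beta> * ln (h t)) t) 0
           = - \<beta> * ((2*w*w*a) * (A - 2*a) - (-2*w*b)*(-2*w*b)) / (A - 2*a)^2"
proof -
  define h1 where "h1 = (\<lambda>t. 2*w*(a * sin(t * w) - b * cos(t * w)))"
  define h2 where "h2 = (\<lambda>t. 2*w*w*(a * cos(t * w) + b * sin(t * w)))"
  have hd: "(h has_real_derivative h1 t) (at t)" for t
    unfolding h_def h1_def
    by (auto intro!: derivative_eq_intros simp: algebra_simps)
  have h1d: "(h1 has_real_derivative h2 t) (at t)" for t
    unfolding h2_def h1_def
    by (auto intro!: derivative_eq_intros simp: algebra_simps)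
  have gd: "((\<lambda>t. L - \<beta> * ln (h t)) has_real_derivative (-\<beta> * h1 t / h t)) (at t)" for t
    using hpos[of t] by (auto intro!: derivative_eq_intros hd simp: field_simps)
  have g1d: "((\<lambda>t. -\<beta> * h1 t / h t) has_real_derivative (-\<beta> * (h2 t * h t - h1 t * h1 t) / (h t)^2)) (at t)" for t
    using hpos[of t] by (auto intro!: derivative_eq_intros hd h1d simp: field_simps power2_eq_square)
  have e: "deriv (\<lambda>t. L - \<beta> * ln (h t)) = (\<lambda>t. -\<beta> * h1 t / h t)"
    using gd DERIV_imp_deriv by blast
  show "deriv (\<lambda>t. L - \<beta> * ln (h t)) 0 = - \<beta> * (-2*w*b) / (A - 2*a)"
    unfolding e by (simp add: h1_def h_def)
  show "deriv (\<lambda>t. deriv (\<lambda>t. L - \<beta> * ln (h t)) t) 0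
           = - \<beta> * ((2*w*w*a) * (A - 2*a) - (-2*w*b)*(-2*w*b)) / (A - 2*a)^2"
    unfolding e using DERIV_imp_deriv[OF g1d[of 0]] by (simp add: h1_def h2_def h_def)
qed
lemma bessel:
  fixes x y u :: "real^'n"
  assumes "y \<bullet> y = 1" "u \<bullet> u = 1" "u \<bullet> y = 0"
  shows "(x \<bullet> y)^2 + (x \<bullet> u)^2 \<le> x \<bullet> x"
proof -
  have "0 \<le> (x - (x \<bullet> y) *\<^sub>R y - (x \<bullet> u) *\<^sub>R u) \<bullet> (x - (x \<bullet> y) *\<^sub>R y - (x \<bullet> u) *\<^sub>R u)"
    by simp
  also have "\<dots> = x \<bullet> x - (x \<bullet> y)^2 - (x \<bullet> u)^2"
    using assms by (simp add: inner_diff_left inner_diff_right inner_commute power2_eq_square algebra_simps)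
  finally show ?thesis by simp
qed

lemma real_ineq:
  fixes n \<beta> w a b D X :: real
  assumes "\<beta> > 0" "D = 1 + X - 2*a" "D > 0" "a^2 + b^2 \<le> X" "X < 1" "X \<ge> 0"
  shows "(n - 1) * w^2 - (- \<beta> * ((2*w*w*a) * D - (-2*w*b)*(-2*w*b)) / D^2)
           - (1 / (- (2*\<beta>))) * (- \<beta> * (-2*w*b) / D)^2 \<ge> (n - 1 - \<beta>/2) * w^2"
proof -
  have k: "D^2 + 4*a*D - 4*b^2 \<ge> 0"
  proof -
    have "D^2 + 4*a*D - 4*b^2 = (1+X)^2 - 4*(a^2+b^2)" unfolding assms(2) by (simp add: algebra_simps power2_eq_square)
    also have "\<dots> \<ge> (1+X)^2 - 4*X" using assms(4) by simp
    moreover have "(1+X)^2 - 4*X = (1-X)^2" by (simp add: algebra_simps power2_eq_square)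
    ultimately show ?thesis by (metis zero_le_power2 order.trans)
  qed
  have "(n - 1) * w^2 - (- \<beta> * ((2*w*w*a) * D - (-2*w*b)*(-2*w*b)) / D^2)
           - (1 / (- (2*\<beta>))) * (- \<beta> * (-2*w*b) / D)^2 - (n - 1 - \<beta>/2) * w^2
        = \<beta> * w^2 * (D^2 + 4*a*D - 4*b^2) / (2 * D^2)"
    using assms(1,3) by (simp add: field_simps power2_eq_square)
  also have "\<dots> \<ge> 0" using k assms(1) by simp
  finally show ?thesis by simp
qed

theorem theorem1p1:
  fixes x :: "real^'n" and \<alpha> c :: real
  assumes "CARD('n) \<ge> 3"
    and "norm x < 1"
    and "\<alpha> \<ge> - sdim TYPE('n)"
    and "c > 0"
  shows "CD_sphere (sdim TYPE('n) - 1 - (sdim TYPE('n) + \<alpha>) / 4) (ereal (- \<alpha>))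
           (\<lambda>y. c / norm (y - x) powr (sdim TYPE('n) + \<alpha>))"
proof -
  define n where "n = sdim TYPE('n)"
  define \<beta> where "\<beta> = (n + \<alpha>) / 2"
  define \<Psi> where "\<Psi> = (\<lambda>y::real^'n. c / norm (y - x) powr (n + \<alpha>))"
  have b0: "\<beta> \<ge> 0" using assms(3) unfolding \<beta>_def n_def by simp
  have rho: "n - 1 - (n + \<alpha>) / 4 = n - 1 - \<beta>/2" unfolding \<beta>_def by simp
  have pos: "\<Psi> y > 0" if "y \<in> sphere 0 1" for y
  proof -
    have "y \<noteq> x" using that assms(2) by auto
    then show ?thesis unfolding \<Psi>_def using assms(4) by simp
  qed
  have main: "weighted_ric (ereal (- \<alpha>)) \<Psi> y v \<ge> ereal ((n - 1 - \<beta>/2) * (norm v)\<^sup>2)"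
    if y: "y \<in> sphere 0 1" and vy: "v \<bullet> y = 0" for y v
  proof (cases "v = 0")
    case True
    have g: "geod y 0 t = y" for t unfolding geod_def by simp
    show ?thesis unfolding weighted_ric_def sph_diff_def sph_hess_def sph_ric_def True g
      by (simp add: zero_ereal_def[symmetric])
  next
    case False
    have y1: "norm y = 1" using y by simp
    define w where "w = norm v"
    define a where "a = x \<bullet> y"
    define b where "b = x \<bullet> (v /\<^sub>R norm v)"
    define A where "A = 1 + (norm x)^2"
    define h where "h = (\<lambda>t. A - 2*(a * cos(t * w) + b * sin(t * w)))"
    have hn: "norm (geod y v t - x) ^ 2 = h t" for t
      using geod_h(1)[OF y1 vy False assms(2), of t] unfolding h_def A_def a_def b_def w_def by simp
    have hp: "h t > 0" for t
      using geod_h(2)[OF y1 vy False assms(2), of t] hn[of t] by (metis zero_less_power)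
    have lnf: "(\<lambda>t. ln (\<Psi> (geod y v t))) = (\<lambda>t. ln c - \<beta> * ln (h t))"
    proof
      fix t
      have r: "norm (geod y v t - x) > 0" using geod_h(2)[OF y1 vy False assms(2)] .
      have "ln (h t) = 2 * ln (norm (geod y v t - x))"
        using r by (simp add: hn[symmetric] ln_realpow)
      then show "ln (\<Psi> (geod y v t)) = ln c - \<beta> * ln (h t)"
        unfolding \<Psi>_def using r assms(4) by (simp add: ln_div ln_powr \<beta>_def algebra_simps)
    qed
    have d: "sph_diff (\<lambda>z. ln (\<Psi> z)) y v = - \<beta> * (-2*w*b) / (A - 2*a)"
      unfolding sph_diff_def lnf h_def by (rule scal_derivs(1)[of A a w b, OF hp[unfolded h_def]])
    have hs: "sph_hess (\<lambda>z. ln (\<Psi> z)) y v = - \<beta> * ((2*w*w*a) * (A - 2*a) - (-2*w*b)*(-2*w*b)) / (A - 2*a)^2"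
      unfolding sph_hess_def lnf h_def by (rule scal_derivs(2)[of A a w b, OF hp[unfolded h_def]])
    have ric: "sph_ric TYPE('n) v = (n - 1) * w^2" unfolding sph_ric_def n_def w_def by simp
    have D: "A - 2*a > 0" using hp[of 0] unfolding h_def by simp
    show ?thesis
    proof (cases "\<beta> = 0")
      case True
      have cd: "cd_coef TYPE('n) (ereal (- \<alpha>)) = \<infinity>"
        unfolding cd_coef_def using True unfolding \<beta>_def n_def by simp
      show ?thesis unfolding weighted_ric_def cd d hs ric using True by (simp add: w_def)
    next
      case False
      then have bp: "\<beta> > 0" using b0 by simp
      have cd: "cd_coef TYPE('n) (ereal (- \<alpha>)) = ereal (1 / (- (2*\<beta>)))"
        unfolding cd_coef_def using bp unfolding \<beta>_def n_def by (simp add: field_simps)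
      have u: "(v /\<^sub>R norm v) \<bullet> (v /\<^sub>R norm v) = 1" "(v /\<^sub>R norm v) \<bullet> y = 0"
        using \<open>v \<noteq> 0\<close> vy by (simp_all add: power2_norm_eq_inner[symmetric])
      have yy: "y \<bullet> y = 1" using y1 by (simp add: power2_norm_eq_inner[symmetric])
      have bes: "a^2 + b^2 \<le> (norm x)^2"
        using bessel[OF yy u, of x] unfolding a_def b_def by (simp add: power2_norm_eq_inner)
      have nx: "(norm x)^2 < 1" using assms(2) by (simp add: power_less_one_iff)
      have ineq: "(n - 1) * w^2 - (- \<beta> * ((2*w*w*a) * (A - 2*a) - (-2*w*b)*(-2*w*b)) / (A - 2*a)^2) - (1 / (- (2*\<beta>))) * (- \<beta> * (-2*w*b) / (A - 2*a))^2 \<ge> (n - 1 - \<beta>/2) * w^2" using real_ineq[OF bp _ D bes nx, of n w] unfolding A_def by simp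
      show ?thesis unfolding weighted_ric_def cd d hs ric w_def[symmetric]
        unfolding times_ereal.simps(1) ereal_minus(1) ereal_less_eq(3)
        using ineq by simp
    qed
  qed
  show ?thesis
    unfolding CD_sphere_def n_def[symmetric] \<Psi>_def[symmetric] rho
    using pos main by blast
qed

end
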